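(* Let $R_0$ be a commutative Noetherian ring. Let $R_0[\mathbb Q]=R_0[a_{ij},\ell_{ij}\ (1\le i\le 2,1\le j\le 3),\psi_{12},\psi_{13},\psi_{23},z_1,z_2]$ be a polynomial ring in these $17$ indeterminates and let $\mathbb Q$ be the complex over $R_0[\mathbb Q]$ described below. Let $R_0[\mathbb B]=R_0[u_{ij}\ (1\le i\le 2,1\le j\le 3),\pi_1,\pi_2,\pi_3,w_1,z_2]$ be a polynomial ring in these $11$ indeterminates and let $\mathbb B$ be the complex over $R_0[\mathbb B]$ described below. Then there is a surjective $R_0$-algebra homomorphism $\Phi:R_0[\mathbb Q]\to R_0[\mathbb B]$ such that the complexes $\mathbb Q\otimes_{R_0[\mathbb Q]}R_0[\mathbb B]$ and $\mathbb B$ are isomorphic.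
   Context: The complex $\mathbb Q$: $0\to R^2\xrightarrow{q_3}R^6\xrightarrow{q_2}R^5\xrightarrow{q_1}R$ (with $R=R_0[\mathbb Q]$). Write $A=(a_{ij})$, $L=(\ell_{ij})$ ($2\times 3$), $P=(\psi_{23},-\psi_{13},\psi_{12})^{\rm T}$, $N=\sum_{i=1}^3(a_{1i}\ell_{2i}-a_{2i}\ell_{1i})$. $q_1=[g_1\ g_2\ g_3\ g_4\ g_5]$ with $g_1=-\det\begin{bmatrix}\psi_{23}&-\psi_{13}&\psi_{12}\\ \ell_{11}&\ell_{12}&\ell_{13}\\ \ell_{21}&\ell_{22}&\ell_{23}\end{bmatrix}-z_2N-z_2z_1$, $g_2=P^{\rm T}A^{\rm T}\begin{bmatrix}\ell_{21}\\-\ell_{11}\end{bmatrix}-z_2(a_{12}a_{23}-a_{13}a_{22})+z_1\psi_{23}$, $g_3=P^{\rm T}A^{\rm T}\begin{bmatrix}\ell_{22}\\-\ell_{12}\end{bmatrix}+z_2(a_{11}a_{23}-a_{13}a_{21})-z_1\psi_{13}$, $g_4=P^{\rm T}A^{\rm T}\begin{bmatrix}\ell_{23}\\-\ell_{13}\end{bmatrix}-z_2(a_{11}a_{22}-a_{12}a_{21})+z_1\psi_{12}$, $g_5=-\det(AL^{\rm T})-z_1N-z_1^2$. $q_2$ ($5\times6$) has columns (rows 1 to 5): $C_1=(\psi_{12}a_{23}-\psi_{13}a_{22}+\psi_{23}a_{21},\ -\ell_{22}\psi_{12}-\ell_{23}\psi_{13}+z_2a_{21},\ \ell_{21}\psi_{12}-\ell_{23}\psi_{23}+z_2a_{22},\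 \ell_{21}\psi_{13}+\ell_{22}\psi_{23}+z_2a_{23},\ 0)$; $C_2=(-\psi_{12}a_{13}+\psi_{13}a_{12}-\psi_{23}a_{11},\ \psi_{12}\ell_{12}+\psi_{13}\ell_{13}-z_2a_{11},\ -\psi_{12}\ell_{11}+\psi_{23}\ell_{13}-z_2a_{12},\ -\psi_{13}\ell_{11}-\psi_{23}\ell_{12}-z_2a_{13},\ 0)$; $C_3=(z_1,\ \ell_{12}\ell_{23}-\ell_{13}\ell_{22},\ -(\ell_{11}\ell_{23}-\ell_{13}\ell_{21}),\ \ell_{11}\ell_{22}-\ell_{12}\ell_{21},\ -z_2)$; $C_4=(a_{12}a_{23}-a_{13}a_{22},\ -(a_{12}\ell_{22}-a_{22}\ell_{12})-(a_{13}\ell_{23}-a_{23}\ell_{13})-z_1,\ a_{12}\ell_{21}-a_{22}\ell_{11},\ a_{13}\ell_{21}-a_{23}\ell_{11},\ -\psi_{23})$; $C_5=(-(a_{11}a_{23}-a_{13}a_{21}),\ a_{11}\ell_{22}-a_{21}\ell_{12},\ -(a_{11}\ell_{21}-a_{21}\ell_{11})-(a_{13}\ell_{23}-a_{23}\ell_{13})-z_1,\ a_{13}\ell_{22}-a_{23}\ell_{12},\ \psi_{13})$; $C_6=(a_{11}a_{22}-a_{12}a_{21},\ a_{11}\ell_{23}-a_{21}\ell_{13},\ a_{12}\ell_{23}-a_{22}\ell_{13},\ -(a_{11}\ell_{21}-a_{21}\ell_{11})-(a_{12}\ell_{22}-a_{22}\ell_{12})-z_1,\ -\psi_{12})$. $q_3$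 ($6\times2$), rows (column 1; column 2): $(a_{11}\ell_{11}+a_{12}\ell_{12}+a_{13}\ell_{13};\ a_{11}\ell_{21}+a_{12}\ell_{22}+a_{13}\ell_{23}+z_1)$, $(a_{21}\ell_{11}+a_{22}\ell_{12}+a_{23}\ell_{13}-z_1;\ a_{21}\ell_{21}+a_{22}\ell_{22}+a_{23}\ell_{23})$, $(-a_{11}\psi_{23}+a_{12}\psi_{13}-a_{13}\psi_{12};\ -a_{21}\psi_{23}+a_{22}\psi_{13}-a_{23}\psi_{12})$, $(-\ell_{12}\psi_{12}-\ell_{13}\psi_{13}+z_2a_{11};\ -\ell_{22}\psi_{12}-\ell_{23}\psi_{13}+z_2a_{21})$, $(\ell_{11}\psi_{12}-\ell_{13}\psi_{23}+z_2a_{12};\ \ell_{21}\psi_{12}-\ell_{23}\psi_{23}+z_2a_{22})$, $(\ell_{11}\psi_{13}+\ell_{12}\psi_{23}+z_2a_{13};\ \ell_{21}\psi_{13}+\ell_{22}\psi_{23}+z_2a_{23})$. The complex $\mathbb B$: $0\to R^2\xrightarrow{b_3}R^6\xrightarrow{b_2}R^5\xrightarrow{b_1}R$ (with $R=R_0[\mathbb B]$). Let $U=(u_{ij})$ ($2\times3$), $\Pi=(\pi_1,\pi_2,\pi_3)^{\rm T}$, $(U\Pi)_1,(U\Pi)_2$ the entries of $U\Pi$, and $\Delta_1=u_{12}u_{23}-u_{13}u_{22}$, $\Delta_2=-(u_{11}u_{23}-u_{13}u_{21})$, $\Delta_3=u_{11}u_{22}-u_{12}u_{21}$. $b_1=[(U\Pi)_1,\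 (U\Pi)_2,\ z_2\Delta_1-w_1\pi_1,\ z_2\Delta_2-w_1\pi_2,\ z_2\Delta_3-w_1\pi_3]$. $b_2$ ($5\times 6$), rows: $((U\Pi)_2,\ 0,\ -w_1,\ -z_2u_{21},\ -z_2u_{22},\ -z_2u_{23})$, $(-(U\Pi)_1,\ w_1,\ 0,\ z_2u_{11},\ z_2u_{12},\ z_2u_{13})$, $(0,\ u_{21},\ -u_{11},\ 0,\ -\pi_3,\ \pi_2)$, $(0,\ u_{22},\ -u_{12},\ \pi_3,\ 0,\ -\pi_1)$, $(0,\ u_{23},\ -u_{13},\ -\pi_2,\ \pi_1,\ 0)$. $b_3$ ($6\times 2$), rows: $(w_1, z_2)$, $((U\Pi)_1,0)$, $((U\Pi)_2,0)$, $(\Delta_1,\pi_1)$, $(\Delta_2,\pi_2)$, $(\Delta_3,\pi_3)$. An isomorphism of complexes means a family of isomorphisms of the modules in each degree commuting with the differentials. *)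

theory Defs
  imports "HOL-Library.Poly_Mapping" "Jordan_Normal_Form.Matrix"
begin

text \<open>The polynomial ring over 'a in the indeterminates of type 'v, realised as
  finitely supported functions from monomials (exponent vectors, themselves
  finitely supported functions 'v to nat) to coefficients.\<close>

type_synonym ('v, 'a) mpoly = "('v \<Rightarrow>\<^sub>0 nat) \<Rightarrow>\<^sub>0 'a"

definition Var :: "'v \<Rightarrow> ('v, 'a::comm_ring_1) mpoly" where
  "Var v = Poly_Mapping.single (Poly_Mapping.single v 1) 1"

definition Const :: "'a::comm_ring_1 \<Rightarrow> ('v, 'a) mpoly" where
  "Const c = Poly_Mapping.single 0 c"

definition R0_algebra_hom :: "(('v, 'a::comm_ring_1) mpoly \<Rightarrow> ('w, 'a) mpoly) \<Rightarrow> bool" where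
  "R0_algebra_hom f \<longleftrightarrow>
     (\<forall>x y. f (x + y) = f x + f y) \<and> (\<forall>x y. f (x * y) = f x * f y) \<and> f 1 = 1 \<and>
     (\<forall>c. f (Const c) = Const c)"

definition is_ideal :: "'a::comm_ring_1 set \<Rightarrow> bool" where
  "is_ideal I \<longleftrightarrow> 0 \<in> I \<and> (\<forall>x\<in>I. \<forall>y\<in>I. x + y \<in> I) \<and> (\<forall>r. \<forall>x\<in>I. r * x \<in> I)"

definition noetherian_ring :: "'a::comm_ring_1 itself \<Rightarrow> bool" where
  "noetherian_ring (T :: 'a itself) \<longleftrightarrow>
     (\<forall>I :: nat \<Rightarrow> 'a set. (\<forall>n. is_ideal (I n)) \<and> (\<forall>n. I n \<subseteq> I (Suc n))
        \<longrightarrow> (\<exists>N. \<forall>n\<ge>N. I n = I N))"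

datatype qvar = A11 | A12 | A13 | A21 | A22 | A23
  | L11 | L12 | L13 | L21 | L22 | L23 | Psi12 | Psi13 | Psi23 | Z1 | Z2

datatype bvar = U11 | U12 | U13 | U21 | U22 | U23 | Pi1 | Pi2 | Pi3 | W1 | BZ2

definition det3 :: "'a::comm_ring_1 \<Rightarrow> 'a \<Rightarrow> 'a \<Rightarrow> 'a \<Rightarrow> 'a \<Rightarrow> 'a \<Rightarrow> 'a \<Rightarrow> 'a \<Rightarrow> 'a \<Rightarrow> 'a" where
  "det3 a b c d e f g h i = a * (e * i - f * h) - b * (d * i - f * g) + c * (d * h - e * g)"

context
  fixes T :: "'a::comm_ring_1 itself"
begin

abbreviation (input) "qv v \<equiv> (Var v :: (qvar, 'a) mpoly)"

definition Qnum :: "(qvar, 'a) mpoly" where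
  "Qnum = (qv A11 * qv L21 - qv A21 * qv L11) + (qv A12 * qv L22 - qv A22 * qv L12)
        + (qv A13 * qv L23 - qv A23 * qv L13)"

text \<open>PAt x y = P^T A^T [x; -y].\<close>
definition QPAt :: "(qvar, 'a) mpoly \<Rightarrow> (qvar, 'a) mpoly \<Rightarrow> (qvar, 'a) mpoly" where
  "QPAt x y = qv Psi23 * (qv A11 * x - qv A21 * y) - qv Psi13 * (qv A12 * x - qv A22 * y)
            + qv Psi12 * (qv A13 * x - qv A23 * y)"

definition QAL :: "nat \<Rightarrow> nat \<Rightarrow> (qvar, 'a) mpoly" where
  "QAL i k = (let a = (if i = 1 then [qv A11, qv A12, qv A13] else [qv A21, qv A22, qv A23]);
                  l = (if k = 1 then [qv L11, qv L12, qv L13] else [qv L21, qv L22, qv L23])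
              in a!0 * l!0 + a!1 * l!1 + a!2 * l!2)"

definition Qg1 :: "(qvar, 'a) mpoly" where
  "Qg1 = - det3 (qv Psi23) (- qv Psi13) (qv Psi12)
                (qv L11) (qv L12) (qv L13) (qv L21) (qv L22) (qv L23)
         - qv Z2 * Qnum - qv Z2 * qv Z1"

definition Qg2 :: "(qvar, 'a) mpoly" where
  "Qg2 = QPAt (qv L21) (qv L11) - qv Z2 * (qv A12 * qv A23 - qv A13 * qv A22) + qv Z1 * qv Psi23"

definition Qg3 :: "(qvar, 'a) mpoly" where
  "Qg3 = QPAt (qv L22) (qv L12) + qv Z2 * (qv A11 * qv A23 - qv A13 * qv A21) - qv Z1 * qv Psi13"

definition Qg4 :: "(qvar, 'a) mpoly" where
  "Qg4 = QPAt (qv L23) (qv L13) - qv Z2 * (qv A11 * qv A22 - qv A12 * qv A21) + qv Z1 * qv Psi12"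

definition Qg5 :: "(qvar, 'a) mpoly" where
  "Qg5 = - (QAL 1 1 * QAL 2 2 - QAL 1 2 * QAL 2 1) - qv Z1 * Qnum - qv Z1 ^ 2"

definition Qq1 :: "(qvar, 'a) mpoly mat" where
  "Qq1 = mat_of_rows_list 5 [[Qg1, Qg2, Qg3, Qg4, Qg5]]"

text \<open>q2 is given by its six columns C1..C6 (each of length 5).\<close>
definition Qq2 :: "(qvar, 'a) mpoly mat" where
  "Qq2 = transpose_mat (mat_of_rows_list 5
    [ [qv Psi12 * qv A23 - qv Psi13 * qv A22 + qv Psi23 * qv A21,
       - qv L22 * qv Psi12 - qv L23 * qv Psi13 + qv Z2 * qv A21,
       qv L21 * qv Psi12 - qv L23 * qv Psi23 + qv Z2 * qv A22,
       qv L21 * qv Psi13 + qv L22 * qv Psi23 + qv Z2 * qv A23,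
       0],
      [- qv Psi12 * qv A13 + qv Psi13 * qv A12 - qv Psi23 * qv A11,
       qv Psi12 * qv L12 + qv Psi13 * qv L13 - qv Z2 * qv A11,
       - qv Psi12 * qv L11 + qv Psi23 * qv L13 - qv Z2 * qv A12,
       - qv Psi13 * qv L11 - qv Psi23 * qv L12 - qv Z2 * qv A13,
       0],
      [qv Z1,
       qv L12 * qv L23 - qv L13 * qv L22,
       - (qv L11 * qv L23 - qv L13 * qv L21),
       qv L11 * qv L22 - qv L12 * qv L21,
       - qv Z2],
      [qv A12 * qv A23 - qv A13 * qv A22,
       - (qv A12 * qv L22 - qv A22 * qv L12) - (qv A13 * qv L23 - qv A23 * qv L13) - qv Z1,
       qv A12 * qv L21 - qv A22 * qv L11,
       qv A13 * qv L21 - qv A23 * qv L11,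
       - qv Psi23],
      [- (qv A11 * qv A23 - qv A13 * qv A21),
       qv A11 * qv L22 - qv A21 * qv L12,
       - (qv A11 * qv L21 - qv A21 * qv L11) - (qv A13 * qv L23 - qv A23 * qv L13) - qv Z1,
       qv A13 * qv L22 - qv A23 * qv L12,
       qv Psi13],
      [qv A11 * qv A22 - qv A12 * qv A21,
       qv A11 * qv L23 - qv A21 * qv L13,
       qv A12 * qv L23 - qv A22 * qv L13,
       - (qv A11 * qv L21 - qv A21 * qv L11) - (qv A12 * qv L22 - qv A22 * qv L12) - qv Z1,
       - qv Psi12] ])"

definition Qq3 :: "(qvar, 'a) mpoly mat" where
  "Qq3 = mat_of_rows_list 2
    [ [qv A11 * qv L11 + qv A12 * qv L12 + qv A13 * qv L13,
       qv A11 * qv L21 + qv A12 * qv L22 + qv A13 * qv L23 + qv Z1],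
      [qv A21 * qv L11 + qv A22 * qv L12 + qv A23 * qv L13 - qv Z1,
       qv A21 * qv L21 + qv A22 * qv L22 + qv A23 * qv L23],
      [- qv A11 * qv Psi23 + qv A12 * qv Psi13 - qv A13 * qv Psi12,
       - qv A21 * qv Psi23 + qv A22 * qv Psi13 - qv A23 * qv Psi12],
      [- qv L12 * qv Psi12 - qv L13 * qv Psi13 + qv Z2 * qv A11,
       - qv L22 * qv Psi12 - qv L23 * qv Psi13 + qv Z2 * qv A21],
      [qv L11 * qv Psi12 - qv L13 * qv Psi23 + qv Z2 * qv A12,
       qv L21 * qv Psi12 - qv L23 * qv Psi23 + qv Z2 * qv A22],
      [qv L11 * qv Psi13 + qv L12 * qv Psi23 + qv Z2 * qv A13,
       qv L21 * qv Psi13 + qv L22 * qv Psi23 + qv Z2 * qv A23] ]"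

abbreviation (input) "bv v \<equiv> (Var v :: (bvar, 'a) mpoly)"

definition BUPi1 :: "(bvar, 'a) mpoly" where
  "BUPi1 = bv U11 * bv Pi1 + bv U12 * bv Pi2 + bv U13 * bv Pi3"
definition BUPi2 :: "(bvar, 'a) mpoly" where
  "BUPi2 = bv U21 * bv Pi1 + bv U22 * bv Pi2 + bv U23 * bv Pi3"
definition BDelta1 :: "(bvar, 'a) mpoly" where
  "BDelta1 = bv U12 * bv U23 - bv U13 * bv U22"
definition BDelta2 :: "(bvar, 'a) mpoly" where
  "BDelta2 = - (bv U11 * bv U23 - bv U13 * bv U21)"
definition BDelta3 :: "(bvar, 'a) mpoly" where
  "BDelta3 = bv U11 * bv U22 - bv U12 * bv U21"

definition Bb1 :: "(bvar, 'a) mpoly mat" where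
  "Bb1 = mat_of_rows_list 5
    [[BUPi1, BUPi2, bv BZ2 * BDelta1 - bv W1 * bv Pi1,
      bv BZ2 * BDelta2 - bv W1 * bv Pi2, bv BZ2 * BDelta3 - bv W1 * bv Pi3]]"

definition Bb2 :: "(bvar, 'a) mpoly mat" where
  "Bb2 = mat_of_rows_list 6
    [ [BUPi2, 0, - bv W1, - bv BZ2 * bv U21, - bv BZ2 * bv U22, - bv BZ2 * bv U23],
      [- BUPi1, bv W1, 0, bv BZ2 * bv U11, bv BZ2 * bv U12, bv BZ2 * bv U13],
      [0, bv U21, - bv U11, 0, - bv Pi3, bv Pi2],
      [0, bv U22, - bv U12, bv Pi3, 0, - bv Pi1],
      [0, bv U23, - bv U13, - bv Pi2, bv Pi1, 0] ]"

definition Bb3 :: "(bvar, 'a) mpoly mat" where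
  "Bb3 = mat_of_rows_list 2
    [ [bv W1, bv BZ2], [BUPi1, 0], [BUPi2, 0],
      [BDelta1, bv Pi1], [BDelta2, bv Pi2], [BDelta3, bv Pi3] ]"

end

text \<open>Complexes 0 -> R^n3 -d3-> R^n2 -d2-> R^n1 -d1-> R^n0 given by matrices
  (acting on column vectors).\<close>

definition complex_iso3 ::
  "nat \<Rightarrow> nat \<Rightarrow> nat \<Rightarrow> nat \<Rightarrow> 'r::comm_ring_1 mat \<Rightarrow> 'r mat \<Rightarrow> 'r mat \<Rightarrow> 'r mat \<Rightarrow> 'r mat \<Rightarrow> 'r mat \<Rightarrow> bool" where
  "complex_iso3 n0 n1 n2 n3 d1 d2 d3 e1 e2 e3 \<longleftrightarrow>
     (\<exists>f0 f1 f2 f3.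
        f0 \<in> carrier_mat n0 n0 \<and> f1 \<in> carrier_mat n1 n1 \<and>
        f2 \<in> carrier_mat n2 n2 \<and> f3 \<in> carrier_mat n3 n3 \<and>
        invertible_mat f0 \<and> invertible_mat f1 \<and> invertible_mat f2 \<and> invertible_mat f3 \<and>
        f0 * d1 = e1 * f1 \<and> f1 * d2 = e2 * f2 \<and> f2 * d3 = e3 * f3)"

end

theory Submission
  imports Defs
begin

definition chi :: "('v \<Rightarrow> ('w, 'a::comm_ring_1) mpoly) \<Rightarrow> ('v \<Rightarrow>\<^sub>0 nat) \<Rightarrow> ('w, 'a) mpoly" where
  "chi f m = (\<Prod>v\<in>Poly_Mapping.keys m. f v ^ Poly_Mapping.lookup m v)"

definition evalp :: "('v \<Rightarrow> ('w, 'a::comm_ring_1) mpoly) \<Rightarrow> ('v, 'a) mpoly \<Rightarrow> ('w, 'a) mpoly" where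
  "evalp f p = (\<Sum>m\<in>Poly_Mapping.keys p. Const (Poly_Mapping.lookup p m) * chi f m)"

lemma chi_superset:
  assumes "finite S" "Poly_Mapping.keys m \<subseteq> S"
  shows "chi f m = (\<Prod>v\<in>S. f v ^ Poly_Mapping.lookup m v)"
  unfolding chi_def
  by (rule prod.mono_neutral_left) (use assms in \<open>auto simp: in_keys_iff\<close>)

lemma chi_add: "chi f (m + n) = chi f m * chi f n"
proof -
  let ?S = "Poly_Mapping.keys m \<union> Poly_Mapping.keys n"
  have "chi f (m + n) = (\<Prod>v\<in>?S. f v ^ Poly_Mapping.lookup (m + n) v)"
    by (rule chi_superset) (use keys_add[of m n] in auto)
  also have "\<dots> = (\<Prod>v\<in>?S. f v ^ Poly_Mapping.lookup m v) * (\<Prod>v\<in>?S. f v ^ Poly_Mapping.lookup n v)"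
    by (simp add: lookup_add power_add prod.distrib)
  also have "\<dots> = chi f m * chi f n"
    by (simp add: chi_superset[symmetric])
  finally show ?thesis .
qed

lemma chi_zero [simp]: "chi f 0 = 1"
  by (simp add: chi_def)

lemma Const_zero [simp]: "Const 0 = 0"
  by (simp add: Const_def)

lemma Const_one [simp]: "Const 1 = 1"
  by (simp add: Const_def)

lemma Const_add: "Const (a + b) = Const a + Const b"
  by (simp add: Const_def single_add)

lemma Const_mult: "Const (a * b) = Const a * Const b"
  by (simp add: Const_def mult_single)

lemma evalp_superset:
  assumes "finite S" "Poly_Mapping.keys p \<subseteq> S"
  shows "evalp f p = (\<Sum>m\<in>S. Const (Poly_Mapping.lookup p m) * chi f m)"
  unfolding evalp_def
  by (rule sum.mono_neutral_left) (use assms in \<open>auto simp: in_keys_iff\<close>)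

lemma evalp_add: "evalp f (p + q) = evalp f p + evalp f q"
proof -
  let ?S = "Poly_Mapping.keys p \<union> Poly_Mapping.keys q"
  have "evalp f (p + q) = (\<Sum>m\<in>?S. Const (Poly_Mapping.lookup (p + q) m) * chi f m)"
    by (rule evalp_superset) (use keys_add[of p q] in auto)
  also have "\<dots> = (\<Sum>m\<in>?S. Const (Poly_Mapping.lookup p m) * chi f m) + (\<Sum>m\<in>?S. Const (Poly_Mapping.lookup q m) * chi f m)"
    by (simp add: lookup_add Const_add distrib_right sum.distrib)
  also have "\<dots> = evalp f p + evalp f q"
    by (simp add: evalp_superset[symmetric])
  finally show ?thesis .
qed

lemma evalp_zero [simp]: "evalp f 0 = 0"
  by (simp add: evalp_def)

lemma evalp_sum: "evalp f (sum g A) = (\<Sum>x\<in>A. evalp f (g x))"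
  by (induction A rule: infinite_finite_induct) (auto simp: evalp_add)

lemma evalp_single: "evalp f (Poly_Mapping.single m c) = Const c * chi f m"
  by (subst evalp_superset[of "{m}"]) auto

lemma poly_expand: "(p :: 'k \<Rightarrow>\<^sub>0 'b::comm_monoid_add) = (\<Sum>m\<in>Poly_Mapping.keys p. Poly_Mapping.single m (Poly_Mapping.lookup p m))"
proof (rule poly_mapping_eqI)
  fix k
  show "Poly_Mapping.lookup p k = Poly_Mapping.lookup (\<Sum>m\<in>Poly_Mapping.keys p. Poly_Mapping.single m (Poly_Mapping.lookup p m)) k"
    by (cases "k \<in> Poly_Mapping.keys p")
       (auto simp: lookup_sum lookup_single in_keys_iff when_def sum.delta)
qed

lemma evalp_mult: "evalp f (p * q) = evalp f p * evalp f q"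
proof -
  let ?K = "Poly_Mapping.keys p" and ?L = "Poly_Mapping.keys q"
  have "p * q = (\<Sum>m\<in>?K. Poly_Mapping.single m (Poly_Mapping.lookup p m)) * (\<Sum>n\<in>?L. Poly_Mapping.single n (Poly_Mapping.lookup q n))"
    by (simp flip: poly_expand)
  also have "\<dots> = (\<Sum>m\<in>?K. \<Sum>n\<in>?L. Poly_Mapping.single (m + n) (Poly_Mapping.lookup p m * Poly_Mapping.lookup q n))"
    by (simp add: sum_product mult_single)
  finally have "evalp f (p * q) = (\<Sum>m\<in>?K. \<Sum>n\<in>?L. Const (Poly_Mapping.lookup p m * Poly_Mapping.lookup q n) * chi f (m + n))"
    by (simp add: evalp_sum evalp_single)
  also have "\<dots> = (\<Sum>m\<in>?K. \<Sum>n\<in>?L. (Const (Poly_Mapping.lookup p m) * chi f m) * (Const (Poly_Mapping.lookup q n) * chi f n))"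
    by (simp add: Const_mult chi_add mult_ac)
  also have "\<dots> = evalp f p * evalp f q"
    by (simp add: evalp_def sum_product)
  finally show ?thesis .
qed

lemma evalp_one [simp]: "evalp f 1 = 1"
proof -
  have "evalp f (Poly_Mapping.single 0 1) = 1" by (subst evalp_single) simp
  then show ?thesis by simp
qed

lemma evalp_Const [simp]: "evalp f (Const c) = Const c"
  by (simp add: Const_def evalp_single)

lemma evalp_Var [simp]: "evalp f (Var v) = f v"
  by (simp add: Var_def evalp_single chi_def)

lemma evalp_hom: "R0_algebra_hom (evalp f)"
  by (simp add: R0_algebra_hom_def evalp_add evalp_mult)

lemma evalp_uminus: "evalp f (- p) = - evalp f p"
  by (metis add.right_inverse add_eq_0_iff evalp_add evalp_zero)

lemma evalp_diff: "evalp f (p - q) = evalp f p - evalp f q"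
proof -
  have "evalp f p = evalp f (p - q) + evalp f q" by (metis diff_add_cancel evalp_add)
  then show ?thesis by (simp add: algebra_simps)
qed

lemma evalp_power: "evalp f (p ^ n) = evalp f p ^ n"
  by (induction n) (auto simp: evalp_mult)

lemma single_add_one: "Poly_Mapping.single (k + l) (1::'a::comm_ring_1) = Poly_Mapping.single k 1 * Poly_Mapping.single l 1"
  by (simp add: mult_single)

lemma single_sum_one:
  "Poly_Mapping.single (sum g A) (1::'a::comm_ring_1) = (\<Prod>x\<in>A. Poly_Mapping.single (g x) 1)"
proof (induction A rule: infinite_finite_induct)
  case (insert x F)
  then show ?case by (simp add: single_add_one)
qed auto

lemma single_single_pow:
  "Poly_Mapping.single (Poly_Mapping.single v n) (1::'a::comm_ring_1) = (Var v :: ('v,'a) mpoly) ^ n"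
proof (induction n)
  case 0 then show ?case by simp
next
  case (Suc n)
  have "Poly_Mapping.single v (Suc n) = Poly_Mapping.single v 1 + Poly_Mapping.single v n"
    by (simp flip: single_add)
  then show ?case using Suc by (simp only: Var_def power_Suc single_add_one)
qed

lemma mpoly_generated:
  fixes S :: "('v, 'a::comm_ring_1) mpoly set"
  assumes C: "\<And>c. Const c \<in> S" and V: "\<And>v. Var v \<in> S"
    and A: "\<And>x y. x \<in> S \<Longrightarrow> y \<in> S \<Longrightarrow> x + y \<in> S"
    and M: "\<And>x y. x \<in> S \<Longrightarrow> y \<in> S \<Longrightarrow> x * y \<in> S"
  shows "p \<in> S"
proof -
  have S0: "0 \<in> S" using C[of 0] by simp
  have S1: "1 \<in> S" using C[of 1] by simp
  have sumS: "sum g F \<in> S" if "\<And>x. x \<in> F \<Longrightarrow> g x \<in> S" for g and F :: "'c set"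
    using that by (induction F rule: infinite_finite_induct) (auto simp: S0 A)
  have prodS: "prod g F \<in> S" if "\<And>x. x \<in> F \<Longrightarrow> g x \<in> S" for g and F :: "'c set"
    using that by (induction F rule: infinite_finite_induct) (auto simp: S1 M)
  have powS: "x ^ n \<in> S" if "x \<in> S" for x n
    using that by (induction n) (auto simp: S1 M)
  have mono: "Poly_Mapping.single m (1::'a) \<in> S" for m :: "'v \<Rightarrow>\<^sub>0 nat"
  proof -
    have "Poly_Mapping.single m (1::'a) =
          Poly_Mapping.single (\<Sum>v\<in>Poly_Mapping.keys m. Poly_Mapping.single v (Poly_Mapping.lookup m v)) 1"
      by (simp flip: poly_expand)
    also have "\<dots> = (\<Prod>v\<in>Poly_Mapping.keys m. (Var v :: ('v,'a) mpoly) ^ Poly_Mapping.lookup m v)"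
      by (simp add: single_sum_one single_single_pow)
    finally show ?thesis by (auto intro!: prodS powS V)
  qed
  have "p = (\<Sum>m\<in>Poly_Mapping.keys p. Const (Poly_Mapping.lookup p m) * Poly_Mapping.single m 1)"
    by (subst poly_expand) (simp add: Const_def mult_single)
  also have "\<dots> \<in> S" by (auto intro!: sumS M C mono)
  finally show ?thesis .
qed

fun phiv :: "qvar \<Rightarrow> (bvar, 'a::comm_ring_1) mpoly" where
  "phiv A11 = 0" | "phiv A12 = Var U11" | "phiv A13 = Var U21"
| "phiv A21 = 1" | "phiv A22 = 0" | "phiv A23 = 0"
| "phiv L11 = Var W1 + Var Pi3" | "phiv L12 = Var U22" | "phiv L13 = - Var U12"
| "phiv L21 = Var BZ2" | "phiv L22 = 0" | "phiv L23 = 0"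
| "phiv Psi12 = Var U13" | "phiv Psi13 = Var U23" | "phiv Psi23 = Var Pi2"
| "phiv Z1 = Var Pi3" | "phiv Z2 = Var Pi1"

lemma less1: "(i::nat) < 1 \<longleftrightarrow> i = 0" by auto
lemma less2: "(i::nat) < 2 \<longleftrightarrow> i = 0 \<or> i = 1" by auto
lemma less5: "(i::nat) < 5 \<longleftrightarrow> i = 0 \<or> i = 1 \<or> i = 2 \<or> i = 3 \<or> i = 4" by auto
lemma less6: "(i::nat) < 6 \<longleftrightarrow> i = 0 \<or> i = 1 \<or> i = 2 \<or> i = 3 \<or> i = 4 \<or> i = 5" by auto
lemma sum1: "(\<Sum>i\<in>{0..<1::nat}. f i) = f 0" by simp
lemma sum2: "(\<Sum>i\<in>{0..<2::nat}. f i) = f 0 + f 1" by (simp add: numeral_eq_Suc)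
lemma sum5: "(\<Sum>i\<in>{0..<5::nat}. f i) = f 0 + f 1 + f 2 + f 3 + f 4" by (simp add: numeral_eq_Suc)
lemma sum6: "(\<Sum>i\<in>{0..<6::nat}. f i) = f 0 + f 1 + f 2 + f 3 + f 4 + f 5" by (simp add: numeral_eq_Suc)

definition F1 :: "(bvar, 'a::comm_ring_1) mpoly mat" where
  "F1 = mat_of_rows_list 5 [[0,0,0,1,0],[0,0,-1,0,0],[-1,0,0,0,0],[0,1,0,0,0],[0,0,0,0,-1]]"

lemma eq1: "1\<^sub>m 1 * map_mat (evalp phiv) Qq1 = (Bb1 :: (bvar, 'a::comm_ring_1) mpoly mat) * F1"
  apply (rule eq_matI)
  apply (simp_all add: Qq1_def Bb1_def F1_def mat_of_rows_list_def less1 less5 scalar_prod_def sum1 sum5)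
  apply (auto simp: Qg1_def Qg2_def Qg3_def Qg4_def Qg5_def QPAt_def QAL_def Qnum_def det3_def
     BUPi1_def BUPi2_def BDelta1_def BDelta2_def BDelta3_def
     evalp_add evalp_mult evalp_diff evalp_uminus evalp_power)
  apply (simp_all add: algebra_simps power2_eq_square)
  done

definition F0 :: "(bvar, 'a::comm_ring_1) mpoly mat" where "F0 = 1\<^sub>m 1"

definition F1i :: "(bvar, 'a::comm_ring_1) mpoly mat" where
  "F1i = mat_of_rows_list 5 [[0,0,-1,0,0],[0,0,0,1,0],[0,-1,0,0,0],[1,0,0,0,0],[0,0,0,0,-1]]"

definition F2 :: "(bvar, 'a::comm_ring_1) mpoly mat" where
  "F2 = mat_of_rows_list 6 [[0,-1,0,0,0,0],[0,Var U13,0,0,-1,0],[0,Var U23,0,0,0,-1],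
     [0,0,0,-1,0,0],[0,0,1,0,0,0],[-1,0,0,0,0,0]]"

definition F2i :: "(bvar, 'a::comm_ring_1) mpoly mat" where
  "F2i = mat_of_rows_list 6 [[0,0,0,0,0,-1],[-1,0,0,0,0,0],[0,0,0,0,1,0],
     [0,0,0,-1,0,0],[- Var U13,-1,0,0,0,0],[- Var U23,0,-1,0,0,0]]"

definition F3 :: "(bvar, 'a::comm_ring_1) mpoly mat" where
  "F3 = mat_of_rows_list 2 [[-1,0],[0,-1]]"

lemmas evs = evalp_add evalp_mult evalp_diff evalp_uminus evalp_power
lemmas qdefs = Qg1_def Qg2_def Qg3_def Qg4_def Qg5_def QPAt_def QAL_def Qnum_def det3_def
lemmas bdefs = BUPi1_def BUPi2_def BDelta1_def BDelta2_def BDelta3_def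

lemma inv1a: "F1 * F1i = (1\<^sub>m 5 :: (bvar, 'a::comm_ring_1) mpoly mat)"
  by (rule eq_matI) (auto simp: F1_def F1i_def mat_of_rows_list_def less5 scalar_prod_def sum5)
lemma inv1b: "F1i * F1 = (1\<^sub>m 5 :: (bvar, 'a::comm_ring_1) mpoly mat)"
  by (rule eq_matI) (auto simp: F1_def F1i_def mat_of_rows_list_def less5 scalar_prod_def sum5)
lemma inv2a: "F2 * F2i = (1\<^sub>m 6 :: (bvar, 'a::comm_ring_1) mpoly mat)"
  by (rule eq_matI) (auto simp: F2_def F2i_def mat_of_rows_list_def less6 scalar_prod_def sum6)
lemma inv2b: "F2i * F2 = (1\<^sub>m 6 :: (bvar, 'a::comm_ring_1) mpoly mat)"
  by (rule eq_matI) (auto simp: F2_def F2i_def mat_of_rows_list_def less6 scalar_prod_def sum6)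
lemma inv3: "F3 * F3 = (1\<^sub>m 2 :: (bvar, 'a::comm_ring_1) mpoly mat)"
  by (rule eq_matI) (auto simp: F3_def mat_of_rows_list_def less2 scalar_prod_def sum2)

lemma invI:
  assumes "A \<in> carrier_mat n n" "B \<in> carrier_mat n n" "A * B = 1\<^sub>m n" "B * A = 1\<^sub>m n"
  shows "invertible_mat A"
  using assms unfolding invertible_mat_def inverts_mat_def by auto

lemma phi_surj: "surj (evalp (phiv :: qvar \<Rightarrow> (bvar, 'a::comm_ring_1) mpoly))"
proof -
  let ?P = "evalp (phiv :: qvar \<Rightarrow> (bvar, 'a) mpoly)"
  have V: "Var b \<in> range ?P" for b
  proof (cases b)
    case U11 then show ?thesis by (metis evalp_Var phiv.simps(2) rangeI)
  next
    case U12 then show ?thesis using evalp_uminus[of phiv "Var L13"]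
      by (metis evalp_Var phiv.simps(9) minus_minus rangeI)
  next
    case U13 then show ?thesis by (metis evalp_Var phiv.simps(13) rangeI)
  next
    case U21 then show ?thesis by (metis evalp_Var phiv.simps(3) rangeI)
  next
    case U22 then show ?thesis by (metis evalp_Var phiv.simps(8) rangeI)
  next
    case U23 then show ?thesis by (metis evalp_Var phiv.simps(14) rangeI)
  next
    case Pi1 then show ?thesis by (metis evalp_Var phiv.simps(17) rangeI)
  next
    case Pi2 then show ?thesis by (metis evalp_Var phiv.simps(15) rangeI)
  next
    case Pi3 then show ?thesis by (metis evalp_Var phiv.simps(16) rangeI)
  next
    case W1
    have "?P (Var L11 - Var Z1) = Var W1" by (simp add: evalp_diff)
    then show ?thesis using W1 by (metis rangeI)
  next
    case BZ2 then show ?thesis by (metis evalp_Var phiv.simps(10) rangeI)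
  qed
  have "p \<in> range ?P" for p
  proof (rule mpoly_generated)
    show "Const c \<in> range ?P" for c by (metis evalp_Const rangeI)
    show "Var v \<in> range ?P" for v by (rule V)
    show "x + y \<in> range ?P" if "x \<in> range ?P" "y \<in> range ?P" for x y
      using that by (auto simp flip: evalp_add)
    show "x * y \<in> range ?P" if "x \<in> range ?P" "y \<in> range ?P" for x y
      using that by (auto simp flip: evalp_mult)
  qed
  then show ?thesis by auto
qed

lemma dims:
  "dim_row (Bb2 :: (bvar, 'a::comm_ring_1) mpoly mat) = 5" "dim_col (Bb2 :: (bvar, 'a::comm_ring_1) mpoly mat) = 6"
  "dim_row (Bb3 :: (bvar, 'a::comm_ring_1) mpoly mat) = 6" "dim_col (Bb3 :: (bvar, 'a::comm_ring_1) mpoly mat) = 2"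
  "dim_row (Qq2 :: (qvar, 'a::comm_ring_1) mpoly mat) = 5" "dim_col (Qq2 :: (qvar, 'a::comm_ring_1) mpoly mat) = 6"
  "dim_row (Qq3 :: (qvar, 'a::comm_ring_1) mpoly mat) = 6" "dim_col (Qq3 :: (qvar, 'a::comm_ring_1) mpoly mat) = 2"
  "dim_row (F1 :: (bvar, 'a::comm_ring_1) mpoly mat) = 5" "dim_col (F1 :: (bvar, 'a::comm_ring_1) mpoly mat) = 5"
  "dim_row (F2 :: (bvar, 'a::comm_ring_1) mpoly mat) = 6" "dim_col (F2 :: (bvar, 'a::comm_ring_1) mpoly mat) = 6"
  "dim_row (F3 :: (bvar, 'a::comm_ring_1) mpoly mat) = 2" "dim_col (F3 :: (bvar, 'a::comm_ring_1) mpoly mat) = 2"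
  by (simp_all add: Bb2_def Bb3_def Qq2_def Qq3_def F1_def F2_def F3_def mat_of_rows_list_def)

lemma eq2: "F1 * map_mat (evalp phiv) Qq2 = (Bb2 :: (bvar, 'a::comm_ring_1) mpoly mat) * F2"
proof (rule eq_matI)
  fix i j assume "i < dim_row (Bb2 * F2 :: (bvar, 'a) mpoly mat)" "j < dim_col (Bb2 * F2 :: (bvar, 'a) mpoly mat)"
  then have "i < 5" "j < 6" by (simp_all add: dims)
  then show "(F1 * map_mat (evalp phiv) Qq2) $$ (i, j) = (Bb2 * F2 :: (bvar, 'a) mpoly mat) $$ (i, j)"
    unfolding less5 less6
    apply (elim disjE)
    apply (simp_all add: dims scalar_prod_def sum5 sum6)
    apply (simp_all add: Qq2_def Bb2_def F1_def F2_def mat_of_rows_list_def qdefs bdefs evs algebra_simps)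
    done
qed (simp_all add: dims)

lemma eq3: "F2 * map_mat (evalp phiv) Qq3 = (Bb3 :: (bvar, 'a::comm_ring_1) mpoly mat) * F3"
proof (rule eq_matI)
  fix i j assume "i < dim_row (Bb3 * F3 :: (bvar, 'a) mpoly mat)" "j < dim_col (Bb3 * F3 :: (bvar, 'a) mpoly mat)"
  then have "i < 6" "j < 2" by (simp_all add: dims)
  then show "(F2 * map_mat (evalp phiv) Qq3) $$ (i, j) = (Bb3 * F3 :: (bvar, 'a) mpoly mat) $$ (i, j)"
    unfolding less6 less2
    apply (elim disjE)
    apply (simp_all add: dims scalar_prod_def sum2 sum6)
    apply (simp_all add: Qq3_def Bb3_def F2_def F3_def mat_of_rows_list_def qdefs bdefs evs algebra_simps)
    done
qed (simp_all add: dims)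

lemma mrl_carrier: "length rs = n \<Longrightarrow> mat_of_rows_list nc rs \<in> carrier_mat n nc"
  by (simp add: mat_of_rows_list_def)

theorem theorem5p10:
  fixes T :: "'a::comm_ring_1 itself"
  assumes "noetherian_ring T"
  shows "\<exists>\<Phi> :: (qvar, 'a) mpoly \<Rightarrow> (bvar, 'a) mpoly.
           R0_algebra_hom \<Phi> \<and> surj \<Phi> \<and>
           complex_iso3 1 5 6 2
             (map_mat \<Phi> Qq1) (map_mat \<Phi> Qq2) (map_mat \<Phi> Qq3)
             (Bb1 :: (bvar, 'a) mpoly mat) Bb2 Bb3"
proof (intro exI[of _ "evalp (phiv :: qvar \<Rightarrow> (bvar, 'a) mpoly)"] conjI)
  show "R0_algebra_hom (evalp (phiv :: qvar \<Rightarrow> (bvar, 'a) mpoly))" by (rule evalp_hom)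
  show "surj (evalp (phiv :: qvar \<Rightarrow> (bvar, 'a) mpoly))" by (rule phi_surj)
  have c0: "(F0 :: (bvar, 'a) mpoly mat) \<in> carrier_mat 1 1" by (simp add: F0_def)
  have c1: "(F1 :: (bvar, 'a) mpoly mat) \<in> carrier_mat 5 5" "(F1i :: (bvar, 'a) mpoly mat) \<in> carrier_mat 5 5"
    by (simp_all add: F1_def F1i_def mrl_carrier)
  have c2: "(F2 :: (bvar, 'a) mpoly mat) \<in> carrier_mat 6 6" "(F2i :: (bvar, 'a) mpoly mat) \<in> carrier_mat 6 6"
    by (simp_all add: F2_def F2i_def mrl_carrier)
  have c3: "(F3 :: (bvar, 'a) mpoly mat) \<in> carrier_mat 2 2"
    by (simp_all add: F3_def mrl_carrier)
  have i0: "invertible_mat (F0 :: (bvar, 'a) mpoly mat)"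
    by (rule invI[OF c0 c0]) (simp_all add: F0_def)
  have i1: "invertible_mat (F1 :: (bvar, 'a) mpoly mat)"
    by (rule invI[OF c1 inv1a inv1b])
  have i2: "invertible_mat (F2 :: (bvar, 'a) mpoly mat)"
    by (rule invI[OF c2 inv2a inv2b])
  have i3: "invertible_mat (F3 :: (bvar, 'a) mpoly mat)"
    by (rule invI[OF c3 c3 inv3 inv3])
  have e1: "F0 * map_mat (evalp phiv) Qq1 = (Bb1 :: (bvar, 'a) mpoly mat) * F1"
    unfolding F0_def by (rule eq1)
  show "complex_iso3 1 5 6 2
     (map_mat (evalp phiv) Qq1) (map_mat (evalp phiv) Qq2) (map_mat (evalp phiv) Qq3)
     (Bb1 :: (bvar, 'a) mpoly mat) Bb2 Bb3"
    unfolding complex_iso3_def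
    apply (rule exI[of _ F0], rule exI[of _ F1], rule exI[of _ F2], rule exI[of _ F3])
    using c0 c1 c2 c3 i0 i1 i2 i3 e1 eq2[where 'a='a] eq3[where 'a='a]
    by (intro conjI) assumption+
qed

end
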